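(* Let $n\ge 2$ and $\sigma\ge 0$. The matrix $\mathbf A_\sigma^{-1}\mathbf B$ is diagonalizable over $\mathbb R$, so its eigenvectors form a basis of $\mathbb R^n$. Its eigenvalues are real and, ordered decreasingly, satisfy $$1\ \ge\ \lambda_1(\mathbf A_\sigma^{-1}\mathbf B)\ \ge\ \dots\ \ge\ \lambda_{n-1}(\mathbf A_\sigma^{-1}\mathbf B)\ >\ 0\ >\ \lambda_n(\mathbf A_\sigma^{-1}\mathbf B)\ \ge\ -1 .$$ In particular, $\mathbf A_\sigma^{-1}\mathbf B$ has exactly one negative eigenvalue.
   Context: Let $\mathbf L\in\mathbb R^{n\times n}$ be the periodic discrete one-dimensional Laplacian, i.e. $(\mathbf L\mathbf x)_i=x_{i-1}-2x_i+x_{i+1}$ with indices taken modulo $n$. For $n\ge3$ this is the circulant matrix with $-2$ on the diagonal and $1$ on the sub- and superdiagonal and in the corners $(1,n),(n,1)$. For $\sigma\ge 0$ set $\mathbf A_\sigma=\mathbf I-\sigma\mathbf L$, which is symmetric positive definite. Let $\mathbf B=\mathrm{diag}(1,\dots,1,-1)\in\mathbb R^{n\times n}$. *)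

theory Defs
  imports "Jordan_Normal_Form.Gauss_Jordan_Elimination" "Jordan_Normal_Form.Char_Poly"
begin

definition lap_mat :: "nat \<Rightarrow> real mat" where
  "lap_mat n = mat n n (\<lambda>(i,j).
      (if j = (i + n - 1) mod n then 1 else 0) - (if j = i then 2 else 0)
    + (if j = (i + 1) mod n then 1 else 0))"

definition A_mat :: "real \<Rightarrow> nat \<Rightarrow> real mat" where
  "A_mat \<sigma> n = 1\<^sub>m n - \<sigma> \<cdot>\<^sub>m lap_mat n"

definition B_mat :: "nat \<Rightarrow> real mat" where
  "B_mat n = mat n n (\<lambda>(i,j). if i = j then (if i = n - 1 then -1 else 1) else 0)"

text \<open>The inverse of A_sigma (A_sigma is invertible; mat_inverse returns Some of the inverse).\<close>
definition A_inv :: "real \<Rightarrow> nat \<Rightarrow> real mat" where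
  "A_inv \<sigma> n = the (mat_inverse (A_mat \<sigma> n))"

end

theory Submission imports Defs "Jordan_Normal_Form.Jordan_Normal_Form_Uniqueness" "Jordan_Normal_Form.Jordan_Normal_Form_Existence" begin


lemma bil_sum:
  fixes H :: "'a::comm_ring_1 mat"
  assumes H: "H \<in> carrier_mat n n" and x: "x \<in> carrier_vec n" and y: "y \<in> carrier_vec n"
  shows "x \<bullet> (H *\<^sub>v y) = (\<Sum>i<n. \<Sum>j<n. x$i * H$$(i,j) * y$j)"
  using H x y
  by (auto simp: scalar_prod_def mult_mat_vec_def row_def sum_distrib_left mult.assoc
        atLeast0LessThan intro!: sum.cong)

lemma bil_sym:
  fixes H :: "'a::comm_ring_1 mat"
  assumes H: "H \<in> carrier_mat n n" and x: "x \<in> carrier_vec n" and y: "y \<in> carrier_vec n"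
  and s: "\<forall>i<n. \<forall>j<n. H$$(i,j) = H$$(j,i)"
  shows "x \<bullet> (H *\<^sub>v y) = y \<bullet> (H *\<^sub>v x)"
proof -
  have "x \<bullet> (H *\<^sub>v y) = (\<Sum>i<n. \<Sum>j<n. x$i * H$$(i,j) * y$j)" by (rule bil_sum[OF H x y])
  also have "\<dots> = (\<Sum>j<n. \<Sum>i<n. x$i * H$$(i,j) * y$j)" by (rule sum.swap)
  also have "\<dots> = (\<Sum>j<n. \<Sum>i<n. y$j * H$$(j,i) * x$i)"
    using s by (auto intro!: sum.cong simp: mult_ac)
  also have "\<dots> = y \<bullet> (H *\<^sub>v x)" by (rule bil_sum[OF H y x, symmetric])
  finally show ?thesis .
qed

lemma real_ev:
  fixes X G :: "real mat"
  assumes X: "X \<in> carrier_mat n n" and G: "G \<in> carrier_mat n n"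
  and Gs: "\<forall>i<n. \<forall>j<n. G$$(i,j) = G$$(j,i)"
  and Hs: "\<forall>i<n. \<forall>j<n. (G*X)$$(i,j) = (G*X)$$(j,i)"
  and pd: "\<forall>v\<in>carrier_vec n. v \<noteq> 0\<^sub>v n \<longrightarrow> v \<bullet> (G *\<^sub>v v) > 0"
  and ev: "eigenvalue (map_mat complex_of_real X) \<mu>"
  shows "Im \<mu> = 0"
proof -
  let ?Xc = "map_mat complex_of_real X"
  from ev obtain v where v: "v \<in> carrier_vec n" "v \<noteq> 0\<^sub>v n" and Xv: "?Xc *\<^sub>v v = \<mu> \<cdot>\<^sub>v v"
    unfolding eigenvalue_def eigenvector_def using X by auto
  define a where "a = vec n (\<lambda>i. Re (v$i))"
  define b where "b = vec n (\<lambda>i. Im (v$i))"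
  have a: "a \<in> carrier_vec n" and b: "b \<in> carrier_vec n" unfolding a_def b_def by auto
  have comp: "(\<Sum>j<n. complex_of_real (X$$(i,j)) * v$j) = \<mu> * v$i" if i: "i < n" for i
  proof -
    have "(?Xc *\<^sub>v v)$i = (\<mu> \<cdot>\<^sub>v v)$i" using Xv by simp
    thus ?thesis using i X v by (auto simp: mult_mat_vec_def scalar_prod_def row_def atLeast0LessThan)
  qed
  have Xa: "X *\<^sub>v a = Re \<mu> \<cdot>\<^sub>v a + (- Im \<mu>) \<cdot>\<^sub>v b"
  proof (rule eq_vecI)
    fix i assume "i < dim_vec (Re \<mu> \<cdot>\<^sub>v a + (- Im \<mu>) \<cdot>\<^sub>v b)"
    hence i: "i < n" using a b by simp
    have "Re (\<Sum>j<n. complex_of_real (X$$(i,j)) * v$j) = Re (\<mu> * v$i)" using comp[OF i] by simp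
    thus "(X *\<^sub>v a) $ i = (Re \<mu> \<cdot>\<^sub>v a + (- Im \<mu>) \<cdot>\<^sub>v b) $ i"
      using i X a b by (simp add: mult_mat_vec_def scalar_prod_def row_def atLeast0LessThan a_def b_def Re_sum)
  qed (insert X a b, auto)
  have Xb: "X *\<^sub>v b = Im \<mu> \<cdot>\<^sub>v a + Re \<mu> \<cdot>\<^sub>v b"
  proof (rule eq_vecI)
    fix i assume "i < dim_vec (Im \<mu> \<cdot>\<^sub>v a + Re \<mu> \<cdot>\<^sub>v b)"
    hence i: "i < n" using a b by simp
    have "Im (\<Sum>j<n. complex_of_real (X$$(i,j)) * v$j) = Im (\<mu> * v$i)" using comp[OF i] by simp
    thus "(X *\<^sub>v b) $ i = (Im \<mu> \<cdot>\<^sub>v a + Re \<mu> \<cdot>\<^sub>v b) $ i"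
      using i X a b by (simp add: mult_mat_vec_def scalar_prod_def row_def atLeast0LessThan a_def b_def Im_sum)
  qed (insert X a b, auto)
  have GX: "G * X \<in> carrier_mat n n" using G X by auto
  have "b \<bullet> (G *\<^sub>v (X *\<^sub>v a)) = b \<bullet> ((G * X) *\<^sub>v a)" using G X a by (simp add: assoc_mult_mat_vec)
  also have "\<dots> = a \<bullet> ((G * X) *\<^sub>v b)" by (rule bil_sym[OF GX b a Hs])
  also have "\<dots> = a \<bullet> (G *\<^sub>v (X *\<^sub>v b))" using G X b by (simp add: assoc_mult_mat_vec)
  finally have eq: "b \<bullet> (G *\<^sub>v (X *\<^sub>v a)) = a \<bullet> (G *\<^sub>v (X *\<^sub>v b))" .
  have ab: "b \<bullet> (G *\<^sub>v a) = a \<bullet> (G *\<^sub>v b)" by (rule bil_sym[OF G b a Gs])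
  have Ga: "G *\<^sub>v a \<in> carrier_vec n" "G *\<^sub>v b \<in> carrier_vec n" using G a b by auto
  have l: "b \<bullet> (G *\<^sub>v (X *\<^sub>v a)) = Re \<mu> * (b \<bullet> (G *\<^sub>v a)) - Im \<mu> * (b \<bullet> (G *\<^sub>v b))"
    unfolding Xa using G a b Ga
    by (simp add: mult_add_distrib_mat_vec mult_mat_vec scalar_prod_add_distrib)
  have r: "a \<bullet> (G *\<^sub>v (X *\<^sub>v b)) = Im \<mu> * (a \<bullet> (G *\<^sub>v a)) + Re \<mu> * (a \<bullet> (G *\<^sub>v b))"
    unfolding Xb using G a b Ga
    by (simp add: mult_add_distrib_mat_vec mult_mat_vec scalar_prod_add_distrib)
  have key: "Im \<mu> * (a \<bullet> (G *\<^sub>v a) + b \<bullet> (G *\<^sub>v b)) = 0"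
    using eq l r ab by (simp add: algebra_simps)
  have nn: "x \<bullet> (G *\<^sub>v x) \<ge> 0" if "x \<in> carrier_vec n" for x
    using pd that G by (cases "x = 0\<^sub>v n") (auto intro: less_imp_le)
  have "a \<noteq> 0\<^sub>v n \<or> b \<noteq> 0\<^sub>v n"
  proof (rule ccontr)
    assume "\<not> ?thesis"
    hence "\<forall>i<n. Re (v$i) = 0 \<and> Im (v$i) = 0" unfolding a_def b_def
      by (metis index_vec index_zero_vec(1))
    hence "v = 0\<^sub>v n" using v by (auto intro!: eq_vecI complex_eqI)
    thus False using v by simp
  qed
  hence "a \<bullet> (G *\<^sub>v a) + b \<bullet> (G *\<^sub>v b) > 0"
    using pd a b nn[OF a] nn[OF b] by (auto simp: add_pos_nonneg add_nonneg_pos)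
  thus ?thesis using key by simp
qed

lemma map_poly_Re_prod:
  assumes "\<forall>a\<in>set as. Im a = 0"
  shows "map_poly complex_of_real (\<Prod>a\<leftarrow>map Re as. [:-a,1:]) = (\<Prod>a\<leftarrow>as. [:-a,1:])"
  using assms
proof (induct as)
  case Nil thus ?case by simp
next
  case (Cons a as)
  interpret m: map_poly_comm_ring_hom complex_of_real ..
  have "complex_of_real (Re a) = a" using Cons(2) by (simp add: complex_eq_iff)
  hence e: "map_poly complex_of_real [:-Re a,1:] = [:-a,1:]" by simp
  have "map_poly complex_of_real (\<Prod>a\<leftarrow>map Re (a#as). [:-a,1:])
     = map_poly complex_of_real ([:-Re a,1:] * (\<Prod>a\<leftarrow>map Re as. [:-a,1:]))" by simp
  also have "\<dots> = map_poly complex_of_real [:-Re a,1:] * map_poly complex_of_real (\<Prod>a\<leftarrow>map Re as. [:-a,1:])"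
    by (rule m.hom_mult)
  finally show ?case using Cons e by simp
qed

lemma real_split:
  fixes X G :: "real mat"
  assumes X: "X \<in> carrier_mat n n" and G: "G \<in> carrier_mat n n"
  and Gs: "\<forall>i<n. \<forall>j<n. G$$(i,j) = G$$(j,i)"
  and Hs: "\<forall>i<n. \<forall>j<n. (G*X)$$(i,j) = (G*X)$$(j,i)"
  and pd: "\<forall>v\<in>carrier_vec n. v \<noteq> 0\<^sub>v n \<longrightarrow> v \<bullet> (G *\<^sub>v v) > 0"
  shows "\<exists>rs. char_poly X = (\<Prod>a\<leftarrow>rs. [:-a,1:])"
proof -
  let ?Xc = "map_mat complex_of_real X"
  have Xc: "?Xc \<in> carrier_mat n n" using X by auto
  obtain as where cp: "char_poly ?Xc = (\<Prod>a\<leftarrow>as. [:-a,1:])"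
    using char_poly_factorized[OF Xc] by blast
  have re: "\<forall>a\<in>set as. Im a = 0"
  proof
    fix a assume a: "a \<in> set as"
    have "poly (char_poly ?Xc) a = 0" unfolding cp poly_prod_list
      using a by (auto simp: prod_list_zero_iff)
    hence "eigenvalue ?Xc a" using eigenvalue_root_char_poly[OF Xc] by simp
    thus "Im a = 0" by (rule real_ev[OF X G Gs Hs pd])
  qed
  have "map_poly complex_of_real (char_poly X) = map_poly complex_of_real (\<Prod>a\<leftarrow>map Re as. [:-a,1:])"
    unfolding of_real_hom.char_poly_hom[OF X, symmetric] cp map_poly_Re_prod[OF re] ..
  hence "char_poly X = (\<Prod>a\<leftarrow>map Re as. [:-a,1:])"
    by (metis (no_types, lifting) coeff_map_poly of_real_0 of_real_eq_iff poly_eqI)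
  thus ?thesis by blast
qed

lemma diag_block_mat_diagonal:
  assumes "\<forall>A\<in>set As. diagonal_mat A \<and> dim_row A = dim_col A"
  shows "diagonal_mat (diag_block_mat As)"
  using assms
proof (induct As)
  case Nil thus ?case by (simp add: diagonal_mat_def)
next
  case (Cons A As)
  define B where "B = diag_block_mat As"
  have B: "diagonal_mat B" using Cons unfolding B_def by auto
  have A: "diagonal_mat A" "dim_row A = dim_col A" using Cons by auto
  have sqB: "dim_row B = dim_col B" unfolding B_def dim_diag_block_mat
    using Cons(2) by (induct As) auto
  show ?case unfolding diag_block_mat.simps Let_def B_def[symmetric] diagonal_mat_def
  proof (intro allI impI)
    fix i j assume i: "i < dim_row (four_block_mat A (0\<^sub>m (dim_row A) (dim_col B)) (0\<^sub>m (dim_row B) (dim_col A)) B)"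
      and j: "j < dim_col (four_block_mat A (0\<^sub>m (dim_row A) (dim_col B)) (0\<^sub>m (dim_row B) (dim_col A)) B)"
      and ij: "i \<noteq> j"
    from i j have i': "i < dim_row A + dim_row B" and j': "j < dim_col A + dim_col B" by auto
    show "four_block_mat A (0\<^sub>m (dim_row A) (dim_col B)) (0\<^sub>m (dim_row B) (dim_col A)) B $$ (i, j) = 0"
    proof (cases "i < dim_row A")
      case True
      show ?thesis
      proof (cases "j < dim_col A")
        case True
        thus ?thesis using \<open>i < dim_row A\<close> ij A(1) i' j' unfolding diagonal_mat_def by simp
      next
        case False
        thus ?thesis using \<open>i < dim_row A\<close> i' j' by simp
      qed
    next
      case False
      show ?thesis
      proof (cases "j < dim_col A")
        case True
        thus ?thesis using \<open>\<not> i < dim_row A\<close> i' j' by simp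
      next
        case False
        have "i - dim_row A \<noteq> j - dim_col A" using False \<open>\<not> i < dim_row A\<close> ij A(2) by simp
        moreover have "i - dim_row A < dim_row B" "j - dim_col A < dim_col B" using i' j' False \<open>\<not> i < dim_row A\<close> by auto
        ultimately have "B $$ (i - dim_row A, j - dim_col A) = 0" using B unfolding diagonal_mat_def by blast
        thus ?thesis using False \<open>\<not> i < dim_row A\<close> i' j' by simp
      qed
    qed
  qed
qed

lemma jordan_matrix_diagonal:
  assumes "\<forall>x\<in>set n_as. fst x = 1"
  shows "diagonal_mat (jordan_matrix n_as)"
  unfolding jordan_matrix_def
proof (rule diag_block_mat_diagonal, intro ballI)
  fix A assume "A \<in> set (map (\<lambda>(n, a). jordan_block n a) n_as)"
  then obtain k e where ke: "(k,e) \<in> set n_as" and A: "A = jordan_block k e" by auto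
  have "k = 1" using assms ke by force
  thus "diagonal_mat A \<and> dim_row A = dim_col A" unfolding A diagonal_mat_def by simp
qed

lemma sum_list_eq_le:
  fixes f g :: "'b \<Rightarrow> nat"
  assumes "\<forall>x\<in>set xs. f x \<le> g x" and "sum_list (map f xs) = sum_list (map g xs)"
  shows "\<forall>x\<in>set xs. f x = g x"
  using assms
proof (induct xs)
  case Nil thus ?case by simp
next
  case (Cons a xs)
  have le: "sum_list (map f xs) \<le> sum_list (map g xs)" using Cons(2) by (intro sum_list_mono) auto
  have "f a \<le> g a" using Cons(2) by simp
  hence fa: "f a = g a" using Cons(3) le by simp
  hence "sum_list (map f xs) = sum_list (map g xs)" using Cons(3) by simp
  hence "\<forall>x\<in>set xs. f x = g x" using Cons(1) Cons(2) by simp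
  thus ?case using fa by simp
qed

lemma ker_sq:
  fixes X G :: "real mat"
  assumes X: "X \<in> carrier_mat n n" and G: "G \<in> carrier_mat n n"
  and Gs: "\<forall>i<n. \<forall>j<n. G$$(i,j) = G$$(j,i)"
  and Hs: "\<forall>i<n. \<forall>j<n. (G*X)$$(i,j) = (G*X)$$(j,i)"
  and pd: "\<forall>v\<in>carrier_vec n. v \<noteq> 0\<^sub>v n \<longrightarrow> v \<bullet> (G *\<^sub>v v) > 0"
  shows "mat_kernel (char_matrix X ev ^\<^sub>m 2) = mat_kernel (char_matrix X ev ^\<^sub>m 1)"
proof -
  define C where "C = char_matrix X ev"
  have C: "C \<in> carrier_mat n n" unfolding C_def using X by simp
  have C1: "C ^\<^sub>m 1 = C" using C by simp
  have C2: "C ^\<^sub>m 2 = C * C" using C by (simp add: numeral_2_eq_2)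
  have GC: "G * C \<in> carrier_mat n n" using G C by simp
  have GCe: "(G * C) $$ (i,j) = (G*X)$$(i,j) - ev * G$$(i,j)" if "i < n" "j < n" for i j
  proof -
    have "G * C = G * X + G * ((-ev) \<cdot>\<^sub>m 1\<^sub>m n)" unfolding C_def char_matrix_def using X G
      by (simp add: mult_add_distrib_mat)
    also have "G * ((-ev) \<cdot>\<^sub>m 1\<^sub>m n) = (-ev) \<cdot>\<^sub>m G" using G
      by (metis mult_smult_distrib one_carrier_mat right_mult_one_mat)
    finally show ?thesis using that G X by simp
  qed
  have GCs: "\<forall>i<n. \<forall>j<n. (G*C)$$(i,j) = (G*C)$$(j,i)" using GCe Hs Gs by simp
  have "mat_kernel (C * C) \<subseteq> mat_kernel C"
  proof
    fix v assume v: "v \<in> mat_kernel (C * C)"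
    have CC: "C * C \<in> carrier_mat n n" using C by simp
    from mat_kernelD[OF CC v] have vc: "v \<in> carrier_vec n" and z: "C * C *\<^sub>v v = 0\<^sub>v n" by auto
    define w where "w = C *\<^sub>v v"
    have wc: "w \<in> carrier_vec n" unfolding w_def using C vc by simp
    have Cw: "C *\<^sub>v w = 0\<^sub>v n" unfolding w_def using z C vc by (simp add: assoc_mult_mat_vec)
    have "w \<bullet> (G *\<^sub>v w) = w \<bullet> ((G * C) *\<^sub>v v)" unfolding w_def using G C vc by (simp add: assoc_mult_mat_vec)
    also have "\<dots> = v \<bullet> ((G * C) *\<^sub>v w)" by (rule bil_sym[OF GC wc vc GCs])
    also have "\<dots> = v \<bullet> (G *\<^sub>v (C *\<^sub>v w))" using G C wc by (simp add: assoc_mult_mat_vec)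
    also have "\<dots> = 0"
    proof -
      have "G *\<^sub>v 0\<^sub>v n = 0\<^sub>v n" using G by (intro eq_vecI) (auto simp: scalar_prod_def)
      thus ?thesis unfolding Cw using vc by simp
    qed
    finally have "w = 0\<^sub>v n" using pd wc by force
    thus "v \<in> mat_kernel C" using C vc unfolding w_def by (intro mat_kernelI) auto
  qed
  moreover have "mat_kernel C \<subseteq> mat_kernel (C * C)" by (rule mat_kernel_mult_subset[OF C C])
  ultimately show ?thesis unfolding C_def[symmetric] C1 C2 by blast
qed

lemma sym_diag:
  fixes X G :: "real mat"
  assumes X: "X \<in> carrier_mat n n" and G: "G \<in> carrier_mat n n"
  and Gs: "\<forall>i<n. \<forall>j<n. G$$(i,j) = G$$(j,i)"
  and Hs: "\<forall>i<n. \<forall>j<n. (G*X)$$(i,j) = (G*X)$$(j,i)"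
  and pd: "\<forall>v\<in>carrier_vec n. v \<noteq> 0\<^sub>v n \<longrightarrow> v \<bullet> (G *\<^sub>v v) > 0"
  shows "\<exists>P Q D. P \<in> carrier_mat n n \<and> Q \<in> carrier_mat n n \<and> D \<in> carrier_mat n n \<and>
     P * Q = 1\<^sub>m n \<and> Q * P = 1\<^sub>m n \<and> diagonal_mat D \<and> X * P = P * D"
proof -
  obtain rs where rs: "char_poly X = (\<Prod>a\<leftarrow>rs. [:-a,1:])" using real_split[OF X G Gs Hs pd] by blast
  obtain n_as where jnf: "jordan_nf X n_as" using jordan_nf_exists[OF X rs] by blast
  have dge: "dim_gen_eigenspace X ev 2 = dim_gen_eigenspace X ev 1" for ev
    unfolding dim_gen_eigenspace_def kernel_dim_def using ker_sq[OF X G Gs Hs pd, of ev] X by simp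
  have ones: "\<forall>x\<in>set n_as. fst x = 1"
  proof
    fix x assume x: "x \<in> set n_as"
    obtain k e where ke: "x = (k,e)" by force
    let ?L = "map fst [(n, e')\<leftarrow>n_as . e' = e]"
    have kL: "k \<in> set ?L" using x ke by force
    have "sum_list (map (min 1) ?L) = sum_list (map (min 2) ?L)"
      using dge[of e] unfolding dim_gen_eigenspace[OF jnf] by simp
    hence "\<forall>y\<in>set ?L. min 1 y = min 2 y" by (intro sum_list_eq_le) auto
    hence "min 1 k = min (2::nat) k" using kL by blast
    moreover have "k \<noteq> 0" using jnf x ke unfolding jordan_nf_def by force
    ultimately show "fst x = 1" using ke by simp
  qed
  have diag: "diagonal_mat (jordan_matrix n_as)" by (rule jordan_matrix_diagonal[OF ones])
  from jnf obtain P Q where wit: "similar_mat_wit X (jordan_matrix n_as) P Q"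
    unfolding jordan_nf_def similar_mat_def by blast
  note w = similar_mat_witD2[OF X wit]
  have P: "P \<in> carrier_mat n n" and Q: "Q \<in> carrier_mat n n" and J: "jordan_matrix n_as \<in> carrier_mat n n"
    and PQ: "P * Q = 1\<^sub>m n" and QP: "Q * P = 1\<^sub>m n" and XPJQ: "X = P * jordan_matrix n_as * Q"
    using w by blast+
  have "X * P = P * jordan_matrix n_as * Q * P" by (subst XPJQ) (rule refl)
  also have "\<dots> = P * jordan_matrix n_as * (Q * P)" by (rule assoc_mult_mat[OF mult_carrier_mat[OF P J] Q P])
  also have "\<dots> = P * jordan_matrix n_as" unfolding QP by (rule right_mult_one_mat[OF mult_carrier_mat[OF P J]])
  finally show ?thesis using P Q J PQ QP diag by blast
qed


lemma diag_sum:
  fixes D :: "'a::comm_ring_1 mat"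
  assumes D: "D \<in> carrier_mat n n" and dD: "diagonal_mat D" and m: "m < n"
  shows "(\<Sum>k\<in>{0..<n}. f k * D$$(k,m)) = f m * D$$(m,m)"
proof -
  have "(\<Sum>k\<in>{0..<n}. f k * D$$(k,m)) = (\<Sum>k\<in>{0..<n}. if k = m then f m * D$$(m,m) else 0)"
    using D dD m unfolding diagonal_mat_def by (intro sum.cong) auto
  also have "\<dots> = f m * D$$(m,m)" using m by simp
  finally show ?thesis .
qed

lemma sort_diag:
  fixes X P Q D :: "real mat"
  assumes X: "X \<in> carrier_mat n n" and P: "P \<in> carrier_mat n n" and Q: "Q \<in> carrier_mat n n"
    and D: "D \<in> carrier_mat n n" and PQ: "P * Q = 1\<^sub>m n" and QP: "Q * P = 1\<^sub>m n"
    and dD: "diagonal_mat D" and XP: "X * P = P * D"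
  shows "\<exists>P' Q' D'. P' \<in> carrier_mat n n \<and> Q' \<in> carrier_mat n n \<and> D' \<in> carrier_mat n n \<and>
     P' * Q' = 1\<^sub>m n \<and> Q' * P' = 1\<^sub>m n \<and> diagonal_mat D' \<and> X * P' = P' * D' \<and>
     (\<forall>i j. i \<le> j \<and> j < n \<longrightarrow> D' $$ (j, j) \<le> D' $$ (i, i))"
proof -
  define xs where "xs = sort_key (\<lambda>i. - D$$(i,i)) [0..<n]"
  define p where "p = (\<lambda>j. xs ! j)"
  have len: "length xs = n" unfolding xs_def by simp
  have setxs: "set xs = {0..<n}" unfolding xs_def by simp
  have dist: "distinct xs" unfolding xs_def by simp
  have sorted: "sorted (map (\<lambda>i. - D$$(i,i)) xs)" unfolding xs_def by (rule sorted_sort_key)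
  have bij: "bij_betw p {0..<n} {0..<n}" unfolding p_def
    using bij_betw_nth[OF dist _ setxs[symmetric]] len by (simp add: lessThan_atLeast0)
  have pn: "p j < n" if "j < n" for j using that len setxs unfolding p_def by (metis atLeastLessThan_iff nth_mem)
  have pinj: "p i = p j \<longleftrightarrow> i = j" if "i < n" "j < n" for i j
    using that dist len unfolding p_def by (simp add: nth_eq_iff_index_eq)
  define P' where "P' = mat n n (\<lambda>(i,j). P$$(i, p j))"
  define Q' where "Q' = mat n n (\<lambda>(i,j). Q$$(p i, j))"
  define D' where "D' = mat n n (\<lambda>(i,j). if i = j then D$$(p i, p i) else 0)"
  have P': "P' \<in> carrier_mat n n" and Q': "Q' \<in> carrier_mat n n" and D': "D' \<in> carrier_mat n n"
    unfolding P'_def Q'_def D'_def by auto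
  have dD': "diagonal_mat D'" unfolding D'_def diagonal_mat_def by auto
  have "X * P' = P' * D'"
  proof (rule eq_matI)
    fix i j assume i: "i < dim_row (P' * D')" and j: "j < dim_col (P' * D')"
    hence i: "i < n" and j: "j < n" using P' D' by auto
    have "(X * P') $$ (i,j) = (X * P) $$ (i, p j)"
      using X P i j pn[OF j] unfolding P'_def by (simp add: scalar_prod_def)
    also have "\<dots> = (P * D) $$ (i, p j)" unfolding XP ..
    also have "\<dots> = (\<Sum>k\<in>{0..<n}. P$$(i,k) * D$$(k, p j))"
      using P D i pn[OF j] by (simp add: scalar_prod_def)
    also have "\<dots> = P$$(i, p j) * D$$(p j, p j)" by (rule diag_sum[OF D dD pn[OF j]])
    also have "\<dots> = (P' * D') $$ (i,j)"
    proof -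
      have "(P' * D') $$ (i,j) = (\<Sum>k\<in>{0..<n}. P$$(i,p k) * D'$$(k, j))"
        using P' D' i j unfolding P'_def by (simp add: scalar_prod_def)
      also have "\<dots> = P$$(i,p j) * D'$$(j,j)" by (rule diag_sum[OF D' dD' j])
      finally show ?thesis using j unfolding D'_def by simp
    qed
    finally show "(X * P') $$ (i,j) = (P' * D') $$ (i,j)" .
  qed (insert X P' D', auto)
  moreover have "Q' * P' = 1\<^sub>m n"
  proof (rule eq_matI)
    fix i j assume i: "i < dim_row (1\<^sub>m n)" and j: "j < dim_col (1\<^sub>m n)"
    hence i: "i < n" and j: "j < n" by auto
    have "(Q' * P') $$ (i,j) = (Q * P) $$ (p i, p j)"
      using Q P Q' P' i j pn[OF i] pn[OF j] unfolding P'_def Q'_def by (simp add: scalar_prod_def)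
    also have "\<dots> = 1\<^sub>m n $$ (i,j)" unfolding QP using i j pn[OF i] pn[OF j] pinj[OF i j] by simp
    finally show "(Q' * P') $$ (i,j) = 1\<^sub>m n $$ (i,j)" .
  qed (insert Q' P', auto)
  moreover have "P' * Q' = 1\<^sub>m n"
  proof (rule eq_matI)
    fix i j assume i: "i < dim_row (1\<^sub>m n)" and j: "j < dim_col (1\<^sub>m n)"
    hence i: "i < n" and j: "j < n" by auto
    have "(P' * Q') $$ (i,j) = (\<Sum>k\<in>{0..<n}. P$$(i, p k) * Q$$(p k, j))"
      using Q' P' i j unfolding P'_def Q'_def by (simp add: scalar_prod_def)
    also have "\<dots> = (\<Sum>k\<in>{0..<n}. P$$(i, k) * Q$$(k, j))"
      by (rule sum.reindex_bij_betw[OF bij, of "\<lambda>k. P$$(i, k) * Q$$(k, j)"])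
    also have "\<dots> = (P * Q) $$ (i,j)" using P Q i j by (simp add: scalar_prod_def)
    also have "\<dots> = 1\<^sub>m n $$ (i,j)" unfolding PQ ..
    finally show "(P' * Q') $$ (i,j) = 1\<^sub>m n $$ (i,j)" .
  qed (insert Q' P', auto)
  moreover have "\<forall>i j. i \<le> j \<and> j < n \<longrightarrow> D' $$ (j, j) \<le> D' $$ (i, i)"
  proof (intro allI impI)
    fix i j assume ij: "i \<le> j \<and> j < n"
    have "map (\<lambda>i. - D$$(i,i)) xs ! i \<le> map (\<lambda>i. - D$$(i,i)) xs ! j"
      using sorted_nth_mono[OF sorted, of i j] ij len by simp
    thus "D' $$ (j, j) \<le> D' $$ (i, i)" using ij len unfolding D'_def p_def by simp
  qed
  ultimately show ?thesis using P' Q' D' dD' by blast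
qed



lemma s_mod: "(i::nat) < n \<Longrightarrow> (i + 1) mod n = (if i + 1 < n then i + 1 else 0)"
proof (cases "i + 1 < n")
  case True thus ?thesis by simp
next
  case False assume "i < n" hence "i + 1 = n" using False by simp
  thus ?thesis using False by simp
qed

lemma p_mod: "(i::nat) < n \<Longrightarrow> (i + n - 1) mod n = (if i = 0 then n - 1 else i - 1)"
proof (cases "i = 0")
  case True assume "i < n" thus ?thesis using True by (simp add: mod_less)
next
  case False assume "i < n"
  hence "i + n - 1 = (i - 1) + n" using False by simp
  moreover have "((i - 1) + n) mod n = i - 1" using \<open>i < n\<close> by simp
  ultimately show ?thesis using False by simp
qed

lemma lap_carrier: "lap_mat n \<in> carrier_mat n n" unfolding lap_mat_def by simp
lemma A_carrier: "A_mat \<sigma> n \<in> carrier_mat n n" unfolding A_mat_def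
  by (rule minus_carrier_mat, rule smult_carrier_mat, rule lap_carrier)
lemma B_carrier: "B_mat n \<in> carrier_mat n n" unfolding B_mat_def by simp

lemma ps: "(i::nat) < n \<Longrightarrow> j < n \<Longrightarrow> (j = (i+n-1) mod n) = (i = (j+1) mod n)"
proof -
  assume i: "i < n" and j: "j < n"
  have "(j = (if i = 0 then n - 1 else i - 1)) = (i = (if j + 1 < n then j + 1 else 0))"
    using i j by (cases "i = 0"; cases "j + 1 < n"; simp; arith)
  thus ?thesis unfolding s_mod[OF j] p_mod[OF i] .
qed

lemma lap_idx: "i < n \<Longrightarrow> j < n \<Longrightarrow> lap_mat n $$ (i,j) =
   (if j = (i + n - 1) mod n then 1 else 0) - (if j = i then 2 else 0) + (if j = (i + 1) mod n then 1 else 0)"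
  unfolding lap_mat_def by simp

lemma lap_sym: "i < n \<Longrightarrow> j < n \<Longrightarrow> lap_mat n $$ (i,j) = lap_mat n $$ (j,i)"
proof -
  assume i: "i < n" and j: "j < n"
  have 1: "(j = (i+n-1) mod n) = (i = (j+1) mod n)" by (rule ps[OF i j])
  have 2: "(i = (j+n-1) mod n) = (j = (i+1) mod n)" by (rule ps[OF j i])
  show ?thesis unfolding lap_idx[OF i j] lap_idx[OF j i] 1 2 by simp
qed

lemma A_idx: "i < n \<Longrightarrow> j < n \<Longrightarrow> A_mat \<sigma> n $$ (i,j) = (if i = j then 1 else 0) - \<sigma> * lap_mat n $$ (i,j)"
  unfolding A_mat_def using lap_carrier[of n] by simp

lemma A_sym: "\<forall>i<n. \<forall>j<n. A_mat \<sigma> n $$ (i,j) = A_mat \<sigma> n $$ (j,i)"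
  using lap_sym[of _ n] by (simp add: A_idx)

lemma B_sym: "\<forall>i<n. \<forall>j<n. B_mat n $$ (i,j) = B_mat n $$ (j,i)"
  unfolding B_mat_def by auto

lemma ind_mult: "(if P then (c::real) else 0) * x = (if P then c * x else 0)" by simp

lemma lap_vec:
  assumes v: "v \<in> carrier_vec n" and i: "i < n"
  shows "(lap_mat n *\<^sub>v v) $ i = v $ ((i + n - 1) mod n) - 2 * v $ i + v $ ((i + 1) mod n)"
proof -
  have a: "(i + n - 1) mod n < n" "(i + 1) mod n < n" using i by auto
  have "(lap_mat n *\<^sub>v v) $ i = (\<Sum>j\<in>{0..<n}. lap_mat n $$ (i,j) * v $ j)"
    using v i lap_carrier[of n] by (simp add: scalar_prod_def)
  also have "\<dots> = (\<Sum>j\<in>{0..<n}. (if j = (i + n - 1) mod n then v $ j else 0)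
     - (if j = i then 2 * v $ j else 0) + (if j = (i + 1) mod n then v $ j else 0))"
  proof (rule sum.cong[OF refl])
    fix j assume "j \<in> {0..<n}"
    hence j: "j < n" by simp
    show "lap_mat n $$ (i,j) * v $ j = (if j = (i + n - 1) mod n then v $ j else 0)
     - (if j = i then 2 * v $ j else 0) + (if j = (i + 1) mod n then v $ j else 0)"
      unfolding lap_idx[OF i j] by (simp only: ring_distribs ind_mult mult_1_left)
  qed
  also have "\<dots> = (\<Sum>j\<in>{0..<n}. (if j = (i + n - 1) mod n then v $ j else 0))
     - (\<Sum>j\<in>{0..<n}. (if j = i then 2 * v $ j else 0)) + (\<Sum>j\<in>{0..<n}. (if j = (i + 1) mod n then v $ j else 0))"
    by (simp only: sum.distrib sum_subtractf)
  also have "\<dots> = v $ ((i + n - 1) mod n) - 2 * v $ i + v $ ((i + 1) mod n)"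
    using a i by simp
  finally show ?thesis .
qed

lemma sq_sum: "(v :: real vec) \<in> carrier_vec n \<Longrightarrow> v \<bullet> v = (\<Sum>i<n. (v$i)^2)"
  by (simp add: scalar_prod_def power2_eq_square atLeast0LessThan)

lemma bij_ineq:
  fixes f :: "nat \<Rightarrow> real"
  assumes h: "bij_betw h {..<(n::nat)} {..<n}"
  shows "(\<Sum>i<n. f i * f (h i)) \<le> (\<Sum>i<n. (f i)^2)"
proof -
  have "(\<Sum>i<n. 2 * (f i * f (h i))) \<le> (\<Sum>i<n. (f i)^2 + (f (h i))^2)"
    by (intro sum_mono) (use sum_squares_bound[of "f i" "f (h i)" for i] in \<open>simp add: mult.assoc\<close>)
  also have "\<dots> = (\<Sum>i<n. (f i)^2) + (\<Sum>i<n. (f (h i))^2)" by (simp add: sum.distrib)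
  also have "(\<Sum>i<n. (f (h i))^2) = (\<Sum>i<n. (f i)^2)"
    by (rule sum.reindex_bij_betw[OF h])
  finally show ?thesis by (simp add: sum_distrib_left[symmetric])
qed

lemma sp: "(a::nat) < n \<Longrightarrow> ((a + n - 1) mod n + 1) mod n = a"
proof -
  assume a: "a < n"
  show ?thesis
  proof (cases "a = 0")
    case True
    have "(a + n - 1) mod n = n - 1" using a True by simp
    moreover have "(n - 1 + 1) mod n = 0" using a by simp
    ultimately show ?thesis using True by simp
  next
    case False
    have "a + n - 1 = (a - 1) + n" using False by simp
    hence "(a + n - 1) mod n = a - 1" using a by (simp del: add_diff_assoc2)
    moreover have "(a - 1 + 1) mod n = a" using a False by simp
    ultimately show ?thesis by simp
  qed
qed

lemma ps2: "(a::nat) < n \<Longrightarrow> ((a + 1) mod n + n - 1) mod n = a"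
proof -
  assume a: "a < n"
  show ?thesis
  proof (cases "a + 1 < n")
    case True
    hence "(a + 1) mod n = a + 1" by simp
    moreover have "(a + 1 + n - 1) mod n = a" using a by simp
    ultimately show ?thesis by simp
  next
    case False
    hence an: "a + 1 = n" using a by simp
    hence "(a + 1) mod n = 0" by simp
    moreover have "(0 + n - 1) mod n = a" using an[symmetric] by simp
    ultimately show ?thesis by simp
  qed
qed

lemma bij_s: "(n::nat) > 0 \<Longrightarrow> bij_betw (\<lambda>i. (i + 1) mod n) {..<n} {..<n}"
proof (rule bij_betw_byWitness[where f' = "\<lambda>i. (i + n - 1) mod n"])
  assume n: "n > 0"
  show "\<forall>a\<in>{..<n}. ((a + 1) mod n + n - 1) mod n = a" using ps2 by blast
  show "\<forall>a\<in>{..<n}. ((a + n - 1) mod n + 1) mod n = a" using sp by blast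
  show "(\<lambda>i. (i + 1) mod n) ` {..<n} \<subseteq> {..<n}" using n by auto
  show "(\<lambda>i. (i + n - 1) mod n) ` {..<n} \<subseteq> {..<n}" using n by auto
qed

lemma bij_p: "(n::nat) > 0 \<Longrightarrow> bij_betw (\<lambda>i. (i + n - 1) mod n) {..<n} {..<n}"
proof (rule bij_betw_byWitness[where f' = "\<lambda>i. (i + 1) mod n"])
  assume n: "n > 0"
  show "\<forall>a\<in>{..<n}. ((a + 1) mod n + n - 1) mod n = a" using ps2 by blast
  show "\<forall>a\<in>{..<n}. ((a + n - 1) mod n + 1) mod n = a" using sp by blast
  show "(\<lambda>i. (i + 1) mod n) ` {..<n} \<subseteq> {..<n}" using n by auto
  show "(\<lambda>i. (i + n - 1) mod n) ` {..<n} \<subseteq> {..<n}" using n by auto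
qed

lemma lap_quad:
  assumes v: "v \<in> carrier_vec n" and n: "n > 0"
  shows "v \<bullet> (lap_mat n *\<^sub>v v) \<le> 0"
proof -
  have "v \<bullet> (lap_mat n *\<^sub>v v) = (\<Sum>i<n. v$i * (lap_mat n *\<^sub>v v) $ i)"
    using v lap_carrier[of n] by (simp add: scalar_prod_def atLeast0LessThan)
  also have "\<dots> = (\<Sum>i<n. v$i * v $ ((i + n - 1) mod n)) - 2 * (\<Sum>i<n. (v$i)^2) + (\<Sum>i<n. v$i * v $ ((i + 1) mod n))"
    using v by (simp add: lap_vec sum.distrib sum_subtractf sum_distrib_left algebra_simps power2_eq_square)
  also have "\<dots> \<le> 0"
    using bij_ineq[OF bij_s[OF n], of "\<lambda>i. v $ i"] bij_ineq[OF bij_p[OF n], of "\<lambda>i. v $ i"] by simp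
  finally show ?thesis .
qed

lemma A_quad:
  assumes v: "v \<in> carrier_vec n" and n: "n > 0" and s: "\<sigma> \<ge> 0"
  shows "v \<bullet> (A_mat \<sigma> n *\<^sub>v v) \<ge> v \<bullet> v"
proof -
  have e: "(A_mat \<sigma> n *\<^sub>v v) $ i = v $ i - \<sigma> * (lap_mat n *\<^sub>v v) $ i" if i: "i < n" for i
  proof -
    have "(A_mat \<sigma> n *\<^sub>v v) $ i = (\<Sum>j\<in>{0..<n}. ((if i = j then 1 else 0) - \<sigma> * lap_mat n $$ (i,j)) * v $ j)"
      using v i lap_carrier[of n] A_carrier[of \<sigma> n] unfolding A_mat_def by (simp add: scalar_prod_def)
    also have "\<dots> = (\<Sum>j\<in>{0..<n}. (if j = i then v $ j else 0) - \<sigma> * (lap_mat n $$ (i,j) * v $ j))"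
      by (intro sum.cong refl) (auto simp: algebra_simps)
    also have "\<dots> = (\<Sum>j\<in>{0..<n}. (if j = i then v $ j else 0)) - \<sigma> * (\<Sum>j\<in>{0..<n}. lap_mat n $$ (i,j) * v $ j)"
      by (simp only: sum_subtractf sum_distrib_left)
    also have "\<dots> = v $ i - \<sigma> * (lap_mat n *\<^sub>v v) $ i"
      using v i lap_carrier[of n] by (simp add: scalar_prod_def)
    finally show ?thesis .
  qed
  have "v \<bullet> (A_mat \<sigma> n *\<^sub>v v) = (\<Sum>i<n. v$i * (v $ i - \<sigma> * (lap_mat n *\<^sub>v v) $ i))"
    using v A_carrier[of \<sigma> n] e by (simp add: scalar_prod_def atLeast0LessThan)
  also have "\<dots> = v \<bullet> v - \<sigma> * (v \<bullet> (lap_mat n *\<^sub>v v))"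
    using v lap_carrier[of n] by (simp add: scalar_prod_def atLeast0LessThan algebra_simps sum_subtractf sum_distrib_left)
  finally have "v \<bullet> (A_mat \<sigma> n *\<^sub>v v) = v \<bullet> v - \<sigma> * (v \<bullet> (lap_mat n *\<^sub>v v))" .
  moreover have "\<sigma> * (v \<bullet> (lap_mat n *\<^sub>v v)) \<le> 0"
    using lap_quad[OF v n] s by (simp add: mult_nonneg_nonpos)
  ultimately show ?thesis by simp
qed

lemma sq_pos: "v \<in> carrier_vec n \<Longrightarrow> v \<noteq> 0\<^sub>v n \<Longrightarrow> v \<bullet> v > (0::real)"
proof -
  assume v: "v \<in> carrier_vec n" and nz: "v \<noteq> 0\<^sub>v n"
  then obtain k where k: "k < n" "v $ k \<noteq> 0" by (metis carrier_vecD eq_vecI index_zero_vec(1,2))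
  have "(\<Sum>i<n. (v$i)^2) > 0"
    by (rule sum_pos2[of _ k]) (use k in auto)
  thus ?thesis using sq_sum[OF v] by simp
qed

lemma B_vec: "v \<in> carrier_vec n \<Longrightarrow> i < n \<Longrightarrow> (B_mat n *\<^sub>v v) $ i = (if i = n - 1 then - v $ i else v $ i)"
proof -
  assume v: "v \<in> carrier_vec n" and i: "i < n"
  have "(B_mat n *\<^sub>v v) $ i = (\<Sum>j\<in>{0..<n}. (if i = j then (if i = n - 1 then -1 else 1) else 0) * v $ j)"
    using v i unfolding B_mat_def by (simp add: scalar_prod_def)
  also have "\<dots> = (\<Sum>j\<in>{0..<n}. if j = i then (if i = n - 1 then -1 else 1) * v $ i else 0)"
    by (intro sum.cong) auto
  also have "\<dots> = (if i = n - 1 then - v $ i else v $ i)" using i by simp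
  finally show ?thesis .
qed

lemma B_quad: "v \<in> carrier_vec n \<Longrightarrow> n > 0 \<Longrightarrow> v \<bullet> (B_mat n *\<^sub>v v) = (\<Sum>i<n. (v$i)^2) - 2 * (v $ (n - 1))^2"
proof -
  assume v: "v \<in> carrier_vec n" and n: "n > 0"
  have "v \<bullet> (B_mat n *\<^sub>v v) = (\<Sum>i<n. v$i * (if i = n - 1 then - v $ i else v $ i))"
    using v B_carrier[of n] B_vec[OF v] by (simp add: scalar_prod_def atLeast0LessThan)
  also have "\<dots> = (\<Sum>i<n. (v$i)^2 - (if i = n - 1 then 2 * (v $ (n - 1))^2 else 0))"
    by (intro sum.cong) (auto simp: power2_eq_square)
  also have "\<dots> = (\<Sum>i<n. (v$i)^2) - 2 * (v $ (n - 1))^2" using n by (simp add: sum_subtractf)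
  finally show ?thesis .
qed


lemma col_eig:
  fixes X P Q D :: "real mat"
  assumes X: "X \<in> carrier_mat n n" and P: "P \<in> carrier_mat n n" and Q: "Q \<in> carrier_mat n n"
    and D: "D \<in> carrier_mat n n" and QP: "Q * P = 1\<^sub>m n"
    and dD: "diagonal_mat D" and XP: "X * P = P * D" and j: "j < n"
  shows "col P j \<in> carrier_vec n" "col P j \<noteq> 0\<^sub>v n" "X *\<^sub>v col P j = D$$(j,j) \<cdot>\<^sub>v col P j"
proof -
  show c: "col P j \<in> carrier_vec n" using col_dim[of P j] P by simp
  show "col P j \<noteq> 0\<^sub>v n"
  proof
    assume z: "col P j = 0\<^sub>v n"
    have "(Q * P) $$ (j,j) = row Q j \<bullet> col P j" using Q P j by simp
    also have "\<dots> = 0" unfolding z using Q j by simp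
    finally show False using QP j by simp
  qed
  show "X *\<^sub>v col P j = D$$(j,j) \<cdot>\<^sub>v col P j"
  proof (rule eq_vecI)
    fix i assume "i < dim_vec (D$$(j,j) \<cdot>\<^sub>v col P j)"
    hence i: "i < n" using P by simp
    have "(X *\<^sub>v col P j) $ i = (X * P) $$ (i,j)" using X P i j by simp
    also have "\<dots> = (P * D) $$ (i,j)" unfolding XP ..
    also have "\<dots> = (\<Sum>k\<in>{0..<n}. P$$(i,k) * D$$(k, j))"
      using P D i j by (simp add: scalar_prod_def)
    also have "\<dots> = P$$(i, j) * D$$(j, j)" by (rule diag_sum[OF D dD j])
    finally show "(X *\<^sub>v col P j) $ i = (D$$(j,j) \<cdot>\<^sub>v col P j) $ i" using i j P by simp
  qed (insert X P, auto)
qed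

lemma det_diag:
  fixes D :: "real mat"
  assumes D: "D \<in> carrier_mat n n" and dD: "diagonal_mat D"
  shows "det D = (\<Prod>i<n. D$$(i,i))"
proof -
  have "upper_triangular D" using dD D unfolding diagonal_mat_def upper_triangular_def by auto
  hence "det D = prod_list (diag_mat D)" using det_upper_triangular D by blast
  also have "\<dots> = (\<Prod>i<n. D$$(i,i))" unfolding prod_list_diag_prod using D by (simp add: atLeast0LessThan)
  finally show ?thesis .
qed

lemma det_sim:
  fixes X P Q D :: "real mat"
  assumes X: "X \<in> carrier_mat n n" and P: "P \<in> carrier_mat n n" and Q: "Q \<in> carrier_mat n n"
    and D: "D \<in> carrier_mat n n" and PQ: "P * Q = 1\<^sub>m n"
    and dD: "diagonal_mat D" and XP: "X * P = P * D"
  shows "det X = (\<Prod>i<n. D$$(i,i))"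
proof -
  have "X = X * (P * Q)" unfolding PQ using X by simp
  also have "\<dots> = X * P * Q" by (rule assoc_mult_mat[OF X P Q, symmetric])
  also have "\<dots> = P * D * Q" unfolding XP ..
  finally have e: "X = P * D * Q" .
  have pq: "det P * det Q = 1" using det_mult[OF P Q] unfolding PQ by simp
  have "det X = det (P * D) * det Q" unfolding e by (rule det_mult[OF mult_carrier_mat[OF P D] Q])
  also have "\<dots> = det D * (det P * det Q)" unfolding det_mult[OF P D] by (simp add: ac_simps)
  also have "\<dots> = det D" unfolding pq by simp
  finally show ?thesis using det_diag[OF D dD] by simp
qed

lemma B_zero: "v \<in> carrier_vec n \<Longrightarrow> B_mat n *\<^sub>v v = 0\<^sub>v n \<Longrightarrow> v = 0\<^sub>v n"
proof -
  assume v: "v \<in> carrier_vec n" and z: "B_mat n *\<^sub>v v = 0\<^sub>v n"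
  show "v = 0\<^sub>v n"
  proof (rule eq_vecI)
    fix i assume "i < dim_vec (0\<^sub>v n :: real vec)"
    hence i: "i < n" by simp
    have "(B_mat n *\<^sub>v v) $ i = 0" using z i by simp
    thus "v $ i = 0\<^sub>v n $ i" using B_vec[OF v i] i by (simp split: if_splits)
  qed (insert v, simp)
qed

lemma B_bound: "v \<in> carrier_vec n \<Longrightarrow> n > 0 \<Longrightarrow> \<bar>v \<bullet> (B_mat n *\<^sub>v v)\<bar> \<le> v \<bullet> v"
proof -
  assume v: "v \<in> carrier_vec n" and n: "n > 0"
  have le: "(v $ (n - 1))^2 \<le> (\<Sum>i<n. (v$i)^2)"
    by (rule member_le_sum[of "n - 1" "{..<n}" "\<lambda>i. (v$i)^2"]) (use n in auto)
  have "0 \<le> (v $ (n - 1))^2" by simp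
  thus ?thesis unfolding B_quad[OF v n] sq_sum[OF v] using le by linarith
qed

lemma B_nonneg: "v \<in> carrier_vec n \<Longrightarrow> n > 0 \<Longrightarrow> v $ (n - 1) = 0 \<Longrightarrow> v \<bullet> (B_mat n *\<^sub>v v) \<ge> 0"
proof -
  assume v: "v \<in> carrier_vec n" and n: "n > 0" and z: "v $ (n - 1) = 0"
  have "0 \<le> (\<Sum>i<n. (v$i)^2)" by (rule sum_nonneg) simp
  thus ?thesis unfolding B_quad[OF v n] z by simp
qed

lemma two_neg:
  fixes a b :: "real vec" and A :: "real mat"
  assumes n: "n > 0" and A: "A \<in> carrier_mat n n"
  and As: "\<forall>i<n. \<forall>j<n. A$$(i,j) = A$$(j,i)"
  and pd: "\<forall>v\<in>carrier_vec n. v \<noteq> 0\<^sub>v n \<longrightarrow> v \<bullet> (A *\<^sub>v v) > 0"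
  and a: "a \<in> carrier_vec n" and b: "b \<in> carrier_vec n"
  and Ba: "B_mat n *\<^sub>v a = \<alpha> \<cdot>\<^sub>v (A *\<^sub>v a)" and Bb: "B_mat n *\<^sub>v b = \<beta> \<cdot>\<^sub>v (A *\<^sub>v b)"
  and al: "\<alpha> < 0" and be: "\<beta> < 0"
  and ind: "\<forall>s t. s \<cdot>\<^sub>v a + t \<cdot>\<^sub>v b = 0\<^sub>v n \<longrightarrow> s = 0 \<and> t = 0"
  shows False
proof -
  have Bc: "B_mat n \<in> carrier_mat n n" by (rule B_carrier)
  obtain s t where st: "s \<noteq> 0 \<or> t \<noteq> 0" and last: "s * a$(n-1) + t * b$(n-1) = 0"
  proof (cases "a$(n-1) = 0 \<and> b$(n-1) = 0")
    case True thus ?thesis using that[of 1 0] by simp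
  next
    case False
    have "b$(n-1) \<noteq> 0 \<or> - a$(n-1) \<noteq> 0" using False by force
    moreover have "b$(n-1) * a$(n-1) + (- a$(n-1)) * b$(n-1) = 0" by simp
    ultimately show ?thesis by (rule that)
  qed
  define x where "x = s \<cdot>\<^sub>v a + t \<cdot>\<^sub>v b"
  have x: "x \<in> carrier_vec n" unfolding x_def using a b by simp
  have xnz: "x \<noteq> 0\<^sub>v n" using ind st unfolding x_def by blast
  have xl: "x $ (n - 1) = 0" unfolding x_def using a b n last by simp
  have Bx0: "x \<bullet> (B_mat n *\<^sub>v x) \<ge> 0" by (rule B_nonneg[OF x n xl])
  have anz: "a \<noteq> 0\<^sub>v n"
  proof
    assume "a = 0\<^sub>v n"
    hence "1 \<cdot>\<^sub>v a + 0 \<cdot>\<^sub>v b = 0\<^sub>v n" using a b by (intro eq_vecI) auto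
    thus False using ind[rule_format, of 1 0] by simp
  qed
  have bnz: "b \<noteq> 0\<^sub>v n"
  proof
    assume "b = 0\<^sub>v n"
    hence "0 \<cdot>\<^sub>v a + 1 \<cdot>\<^sub>v b = 0\<^sub>v n" using a b by (intro eq_vecI) auto
    thus False using ind[rule_format, of 0 1] by simp
  qed
  define qa where "qa = a \<bullet> (A *\<^sub>v a)"
  define qb where "qb = b \<bullet> (A *\<^sub>v b)"
  define r where "r = a \<bullet> (A *\<^sub>v b)"
  have qa: "qa > 0" unfolding qa_def using pd a anz by blast
  have qb: "qb > 0" unfolding qb_def using pd b bnz by blast
  have rs: "b \<bullet> (A *\<^sub>v a) = r" unfolding r_def by (rule bil_sym[OF A b a As])
  have Bs: "a \<bullet> (B_mat n *\<^sub>v b) = b \<bullet> (B_mat n *\<^sub>v a)" by (rule bil_sym[OF Bc a b B_sym])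
  have Aa: "A *\<^sub>v a \<in> carrier_vec n" and Ab: "A *\<^sub>v b \<in> carrier_vec n" using A a b by auto
  have "a \<bullet> (B_mat n *\<^sub>v b) = \<beta> * r" unfolding Bb r_def using a Ab by simp
  moreover have "b \<bullet> (B_mat n *\<^sub>v a) = \<alpha> * r" unfolding Ba rs[symmetric] using b Aa by simp
  ultimately have abr: "(\<alpha> - \<beta>) * r = 0" using Bs by (simp add: algebra_simps)
  have Bxe: "B_mat n *\<^sub>v x = (s * \<alpha>) \<cdot>\<^sub>v (A *\<^sub>v a) + (t * \<beta>) \<cdot>\<^sub>v (A *\<^sub>v b)"
    unfolding x_def using Bc a b Aa Ab
    by (simp add: mult_add_distrib_mat_vec mult_mat_vec Ba Bb smult_smult_assoc)
  have xB: "x \<bullet> (B_mat n *\<^sub>v x) = s * s * \<alpha> * qa + s * t * \<beta> * r + t * s * \<alpha> * r + t * t * \<beta> * qb"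
    unfolding Bxe unfolding x_def qa_def qb_def r_def using a b Aa Ab
    by (simp add: scalar_prod_add_distrib[of _ n] add_scalar_prod_distrib[of _ n] algebra_simps rs[unfolded r_def])
  have Axe: "A *\<^sub>v x = s \<cdot>\<^sub>v (A *\<^sub>v a) + t \<cdot>\<^sub>v (A *\<^sub>v b)"
    unfolding x_def using A a b by (simp add: mult_add_distrib_mat_vec mult_mat_vec)
  have xA: "x \<bullet> (A *\<^sub>v x) = s * s * qa + s * t * r + t * s * r + t * t * qb"
    unfolding Axe unfolding x_def qa_def qb_def r_def using a b Aa Ab
    by (simp add: scalar_prod_add_distrib[of _ n] add_scalar_prod_distrib[of _ n] algebra_simps rs[unfolded r_def])
  have xApos: "x \<bullet> (A *\<^sub>v x) > 0" using pd x xnz by blast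
  have "x \<bullet> (B_mat n *\<^sub>v x) < 0"
  proof (cases "\<alpha> = \<beta>")
    case True
    hence "x \<bullet> (B_mat n *\<^sub>v x) = \<alpha> * (x \<bullet> (A *\<^sub>v x))" unfolding xB xA by (simp add: algebra_simps)
    thus ?thesis using xApos al by (simp add: mult_neg_pos)
  next
    case False
    hence r0: "r = 0" using abr by simp
    have e: "x \<bullet> (B_mat n *\<^sub>v x) = (s * s) * (\<alpha> * qa) + (t * t) * (\<beta> * qb)" unfolding xB r0 by simp
    have "\<alpha> * qa < 0" "\<beta> * qb < 0" using al be qa qb by (auto simp: mult_neg_pos)
    moreover have "s * s \<ge> 0" "t * t \<ge> 0" by auto
    moreover have "s * s > 0 \<or> t * t > 0" using st by (auto simp: zero_less_mult_iff)
    ultimately show ?thesis unfolding e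
      by (smt (verit) mult_nonneg_nonpos mult_pos_neg)
  qed
  thus False using Bx0 by simp
qed

lemma mat_vec_zero: "(A :: real mat) \<in> carrier_mat nr nc \<Longrightarrow> A *\<^sub>v 0\<^sub>v nc = 0\<^sub>v nr"
  by (intro eq_vecI) (auto simp: scalar_prod_def)

theorem lemma3p1:
  fixes n :: nat and \<sigma> :: real
  assumes "n \<ge> 2" and "\<sigma> \<ge> 0"
  shows "(\<exists>P D. P \<in> carrier_mat n n \<and> D \<in> carrier_mat n n \<and> invertible_mat P \<and> diagonal_mat D
           \<and> A_inv \<sigma> n * B_mat n * P = P * D
           \<and> (\<forall>i j. i \<le> j \<and> j < n \<longrightarrow> D $$ (j, j) \<le> D $$ (i, i))
           \<and> D $$ (0, 0) \<le> 1
           \<and> D $$ (n - 2, n - 2) > 0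
           \<and> D $$ (n - 1, n - 1) < 0
           \<and> D $$ (n - 1, n - 1) \<ge> -1)
         \<and> card {\<mu>. eigenvalue (A_inv \<sigma> n * B_mat n) \<mu> \<and> \<mu> < 0} = 1"
proof -
  have n0: "n > 0" using assms(1) by simp
  define A where "A = A_mat \<sigma> n"
  define B where "B = B_mat n"
  have A: "A \<in> carrier_mat n n" unfolding A_def by (rule A_carrier)
  have B: "B \<in> carrier_mat n n" unfolding B_def by (rule B_carrier)
  have As: "\<forall>i<n. \<forall>j<n. A$$(i,j) = A$$(j,i)" unfolding A_def by (rule A_sym)
  have Aq: "v \<bullet> (A *\<^sub>v v) \<ge> v \<bullet> v" if "v \<in> carrier_vec n" for v
    unfolding A_def by (rule A_quad[OF that n0 assms(2)])
  have Apd: "\<forall>v\<in>carrier_vec n. v \<noteq> 0\<^sub>v n \<longrightarrow> v \<bullet> (A *\<^sub>v v) > 0"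
  proof (intro ballI impI)
    fix v :: "real vec" assume v: "v \<in> carrier_vec n" and nz: "v \<noteq> 0\<^sub>v n"
    show "v \<bullet> (A *\<^sub>v v) > 0" using sq_pos[OF v nz] Aq[OF v] by linarith
  qed
  have detA0: "det A \<noteq> 0"
  proof
    assume "det A = 0"
    then obtain v where v: "v \<in> carrier_vec n" "v \<noteq> 0\<^sub>v n" "A *\<^sub>v v = 0\<^sub>v n"
      using det_0_iff_vec_prod_zero[OF A] by blast
    have "v \<bullet> (A *\<^sub>v v) = 0" unfolding v(3) using v(1) by simp
    thus False using Apd v(1,2) by force
  qed
  have unit: "A \<in> Units (ring_mat TYPE(real) n ())" by (rule det_non_zero_imp_unit[OF A detA0])
  obtain Ai where mi: "mat_inverse A = Some Ai"
  proof (cases "mat_inverse A")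
    case None thus ?thesis using mat_inverse(1)[OF A None, of "()"] unit by simp
  next
    case (Some Ai) thus ?thesis using that by blast
  qed
  have AAi: "A * Ai = 1\<^sub>m n" and AiA: "Ai * A = 1\<^sub>m n" and Ai: "Ai \<in> carrier_mat n n"
    using mat_inverse(2)[OF A mi] by auto
  have Ainv_eq: "A_inv \<sigma> n = Ai" unfolding A_inv_def A_def[symmetric] mi by simp
  define M where "M = Ai * B"
  have M: "M \<in> carrier_mat n n" unfolding M_def using Ai B by simp
  have AM: "A * M = B"
  proof -
    have "A * M = A * Ai * B" unfolding M_def by (rule assoc_mult_mat[OF A Ai B, symmetric])
    also have "\<dots> = B" unfolding AAi using B by simp
    finally show ?thesis .
  qed
  have Ms: "\<forall>i<n. \<forall>j<n. (A*M)$$(i,j) = (A*M)$$(j,i)" unfolding AM B_def by (rule B_sym)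
  obtain P0 Q0 D0 where P0: "P0 \<in> carrier_mat n n" and Q0: "Q0 \<in> carrier_mat n n" and D0: "D0 \<in> carrier_mat n n"
    and P0Q0: "P0 * Q0 = 1\<^sub>m n" and Q0P0: "Q0 * P0 = 1\<^sub>m n" and dD0: "diagonal_mat D0" and MP0: "M * P0 = P0 * D0"
    using sym_diag[OF M A As Ms Apd] by blast
  obtain P Q D where P: "P \<in> carrier_mat n n" and Q: "Q \<in> carrier_mat n n" and D: "D \<in> carrier_mat n n"
    and PQ: "P * Q = 1\<^sub>m n" and QP: "Q * P = 1\<^sub>m n" and dD: "diagonal_mat D" and MP: "M * P = P * D"
    and sorted: "\<forall>i j. i \<le> j \<and> j < n \<longrightarrow> D $$ (j, j) \<le> D $$ (i, i)"
    using sort_diag[OF M P0 Q0 D0 P0Q0 Q0P0 dD0 MP0] by blast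
  define d where "d = (\<lambda>j. D $$ (j,j))"
  have cc: "col P j \<in> carrier_vec n" "col P j \<noteq> 0\<^sub>v n" "M *\<^sub>v col P j = d j \<cdot>\<^sub>v col P j" if j: "j < n" for j
    using col_eig[OF M P Q D QP dD MP j] unfolding d_def by auto
  have Bc: "B *\<^sub>v col P j = d j \<cdot>\<^sub>v (A *\<^sub>v col P j)" if j: "j < n" for j
  proof -
    have "B *\<^sub>v col P j = A *\<^sub>v (M *\<^sub>v col P j)" unfolding AM[symmetric] using A M cc(1)[OF j] by simp
    also have "\<dots> = A *\<^sub>v (d j \<cdot>\<^sub>v col P j)" unfolding cc(3)[OF j] ..
    also have "\<dots> = d j \<cdot>\<^sub>v (A *\<^sub>v col P j)" by (rule mult_mat_vec[OF A cc(1)[OF j]])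
    finally show ?thesis .
  qed
  have dbound: "\<bar>d j\<bar> \<le> 1" if j: "j < n" for j
  proof -
    let ?c = "col P j"
    have c: "?c \<in> carrier_vec n" and cnz: "?c \<noteq> 0\<^sub>v n" using cc[OF j] by auto
    have Ac: "A *\<^sub>v ?c \<in> carrier_vec n" using A c by simp
    have e: "?c \<bullet> (B *\<^sub>v ?c) = d j * (?c \<bullet> (A *\<^sub>v ?c))" unfolding Bc[OF j] using c Ac by simp
    have b: "\<bar>?c \<bullet> (B *\<^sub>v ?c)\<bar> \<le> ?c \<bullet> ?c" unfolding B_def by (rule B_bound[OF c n0])
    have q: "?c \<bullet> ?c \<le> ?c \<bullet> (A *\<^sub>v ?c)" by (rule Aq[OF c])
    have qp: "?c \<bullet> (A *\<^sub>v ?c) > 0" using Apd c cnz by blast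
    have h1: "\<bar>?c \<bullet> (B *\<^sub>v ?c)\<bar> = \<bar>d j\<bar> * (?c \<bullet> (A *\<^sub>v ?c))" unfolding e using qp by (simp add: abs_mult)
    have "\<bar>d j\<bar> * (?c \<bullet> (A *\<^sub>v ?c)) \<le> 1 * (?c \<bullet> (A *\<^sub>v ?c))"
      using b q h1 by linarith
    thus ?thesis using qp by (rule mult_right_le_imp_le)
  qed
  have dnz: "d j \<noteq> 0" if j: "j < n" for j
  proof
    assume z: "d j = 0"
    have "B *\<^sub>v col P j = 0\<^sub>v n" unfolding Bc[OF j] z using A cc(1)[OF j] by (intro eq_vecI) auto
    hence "col P j = 0\<^sub>v n" using B_zero[OF cc(1)[OF j]] unfolding B_def by blast
    thus False using cc(2)[OF j] by blast
  qed
  have detM: "det M = (\<Prod>i<n. d i)" unfolding d_def by (rule det_sim[OF M P Q D PQ dD MP])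
  have Is: "\<forall>i<n. \<forall>j<n. (1\<^sub>m n :: real mat)$$(i,j) = (1\<^sub>m n :: real mat)$$(j,i)" by auto
  have IAs: "\<forall>i<n. \<forall>j<n. (1\<^sub>m n * A)$$(i,j) = (1\<^sub>m n * A)$$(j,i)" using As A by simp
  have Ipd: "\<forall>v\<in>carrier_vec n. v \<noteq> 0\<^sub>v n \<longrightarrow> v \<bullet> ((1\<^sub>m n :: real mat) *\<^sub>v v) > 0"
    using sq_pos by simp
  obtain P1 Q1 D1 where P1: "P1 \<in> carrier_mat n n" and Q1: "Q1 \<in> carrier_mat n n" and D1: "D1 \<in> carrier_mat n n"
    and P1Q1: "P1 * Q1 = 1\<^sub>m n" and Q1P1: "Q1 * P1 = 1\<^sub>m n" and dD1: "diagonal_mat D1" and AP1: "A * P1 = P1 * D1"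
    using sym_diag[OF A one_carrier_mat Is IAs Ipd] by blast
  have D1pos: "D1 $$ (j,j) > 0" if j: "j < n" for j
  proof -
    note e = col_eig[OF A P1 Q1 D1 Q1P1 dD1 AP1 j]
    let ?c = "col P1 j"
    have "?c \<bullet> (A *\<^sub>v ?c) = D1 $$ (j,j) * (?c \<bullet> ?c)" unfolding e(3) using e(1) by simp
    moreover have "?c \<bullet> (A *\<^sub>v ?c) > 0" using Apd e(1,2) by blast
    moreover have "?c \<bullet> ?c > 0" by (rule sq_pos[OF e(1,2)])
    ultimately show ?thesis by (simp add: zero_less_mult_iff)
  qed
  have detA: "det A > 0"
    unfolding det_sim[OF A P1 Q1 D1 P1Q1 dD1 AP1] using D1pos by (intro prod_pos) auto
  have "det A * det Ai = 1" using det_mult[OF A Ai] unfolding AAi by simp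
  hence detAi: "det Ai > 0" using detA zero_less_mult_iff[of "det A" "det Ai"] by simp
  have dB: "diagonal_mat B" unfolding B_def B_mat_def diagonal_mat_def by simp
  have "det B = (\<Prod>i<n. B$$(i,i))" by (rule det_diag[OF B dB])
  also have "\<dots> = (\<Prod>i<n. if i = n - 1 then -1 else 1)" unfolding B_def B_mat_def
    by (intro prod.cong) auto
  also have "\<dots> = -1"
  proof -
    have "n = Suc (n - 1)" using n0 by simp
    hence "(\<Prod>i<n. if i = n - 1 then -1 else (1::real)) = (\<Prod>i<Suc (n-1). if i = n - 1 then -1 else 1)" by simp
    also have "\<dots> = (\<Prod>i<n-1. if i = n - 1 then -1 else 1) * (-1)" by simp
    also have "(\<Prod>i<n-1. if i = n - 1 then -1 else (1::real)) = 1" by (intro prod.neutral) auto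
    finally show ?thesis by simp
  qed
  finally have detB: "det B = -1" .
  have "det M = det Ai * det B" unfolding M_def by (rule det_mult[OF Ai B])
  hence prodneg: "(\<Prod>i<n. d i) < 0" using detM detB detAi by simp
  have dlast: "d (n - 1) < 0"
  proof (rule ccontr)
    assume "\<not> d (n - 1) < 0"
    have "d i \<ge> 0" if i: "i < n" for i
    proof -
      have "d (n - 1) \<le> d i" using sorted i n0 unfolding d_def by simp
      thus ?thesis using \<open>\<not> d (n - 1) < 0\<close> by simp
    qed
    hence "\<forall>i<n. d i \<ge> 0" by blast
    hence "(\<Prod>i<n. d i) \<ge> 0" by (intro prod_nonneg) auto
    thus False using prodneg by simp
  qed
  have n2: "n - 2 < n" "n - 1 < n" "n - 2 \<noteq> n - 1" using assms(1) by auto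
  have dpen: "d (n - 2) > 0"
  proof (rule ccontr)
    assume "\<not> d (n - 2) > 0"
    hence neg2: "d (n - 2) < 0" using dnz[OF n2(1)] by simp
    let ?a = "col P (n - 2)" and ?b = "col P (n - 1)"
    have ind: "\<forall>s t. s \<cdot>\<^sub>v ?a + t \<cdot>\<^sub>v ?b = 0\<^sub>v n \<longrightarrow> s = 0 \<and> t = 0"
    proof (intro allI impI)
      fix s t assume z: "s \<cdot>\<^sub>v ?a + t \<cdot>\<^sub>v ?b = 0\<^sub>v n"
      have ca: "Q *\<^sub>v ?a = unit_vec n (n - 2)"
        using col_mult2[OF Q P n2(1), symmetric] unfolding QP using n2(1) by simp
      have cb: "Q *\<^sub>v ?b = unit_vec n (n - 1)"
        using col_mult2[OF Q P n2(2), symmetric] unfolding QP using n2(2) by simp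
      have "Q *\<^sub>v (s \<cdot>\<^sub>v ?a + t \<cdot>\<^sub>v ?b) = s \<cdot>\<^sub>v (Q *\<^sub>v ?a) + t \<cdot>\<^sub>v (Q *\<^sub>v ?b)"
        using Q cc(1)[OF n2(1)] cc(1)[OF n2(2)] by (simp add: mult_add_distrib_mat_vec mult_mat_vec)
      also have "\<dots> = s \<cdot>\<^sub>v unit_vec n (n - 2) + t \<cdot>\<^sub>v unit_vec n (n - 1)" unfolding ca cb ..
      moreover have "Q *\<^sub>v (s \<cdot>\<^sub>v ?a + t \<cdot>\<^sub>v ?b) = 0\<^sub>v n" unfolding z by (rule mat_vec_zero[OF Q])
      ultimately have e: "s \<cdot>\<^sub>v unit_vec n (n - 2) + t \<cdot>\<^sub>v unit_vec n (n - 1) = 0\<^sub>v n" by simp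
      have "(s \<cdot>\<^sub>v unit_vec n (n - 2) + t \<cdot>\<^sub>v unit_vec n (n - 1)) $ (n - 2) = 0" unfolding e using n2 by simp
      hence s0: "s = 0" using n2 by simp
      have "(s \<cdot>\<^sub>v unit_vec n (n - 2) + t \<cdot>\<^sub>v unit_vec n (n - 1)) $ (n - 1) = 0" unfolding e using n2 by simp
      hence t0: "t = 0" using n2 by simp
      show "s = 0 \<and> t = 0" using s0 t0 by simp
    qed
    show False
      by (rule two_neg[OF n0 A As Apd cc(1)[OF n2(1)] cc(1)[OF n2(2)] Bc[OF n2(1), unfolded B_def]
            Bc[OF n2(2), unfolded B_def] neg2 dlast ind])
  qed
  have QM: "Q * M = D * Q"
  proof -
    have "Q * M = (Q * M) * (P * Q)" unfolding PQ using Q M by simp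
    also have "\<dots> = ((Q * M) * P) * Q" by (rule assoc_mult_mat[OF mult_carrier_mat[OF Q M] P Q, symmetric])
    also have "(Q * M) * P = Q * (M * P)" by (rule assoc_mult_mat[OF Q M P])
    also have "Q * (M * P) = (Q * P) * D" unfolding MP by (rule assoc_mult_mat[OF Q P D, symmetric])
    also have "(Q * P) * D = D" unfolding QP using D by simp
    finally show ?thesis .
  qed
  have sub: "{\<mu>. eigenvalue M \<mu> \<and> \<mu> < 0} \<subseteq> {d (n - 1)}"
  proof
    fix \<mu> assume "\<mu> \<in> {\<mu>. eigenvalue M \<mu> \<and> \<mu> < 0}"
    hence ev: "eigenvalue M \<mu>" and mneg: "\<mu> < 0" by auto
    then obtain v where v: "v \<in> carrier_vec n" and vnz: "v \<noteq> 0\<^sub>v n" and Mv: "M *\<^sub>v v = \<mu> \<cdot>\<^sub>v v"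
      unfolding eigenvalue_def eigenvector_def using M by auto
    define w where "w = Q *\<^sub>v v"
    have w: "w \<in> carrier_vec n" unfolding w_def using Q v by simp
    have Pw: "P *\<^sub>v w = v" unfolding w_def using P Q v
      by (metis PQ assoc_mult_mat_vec one_mult_mat_vec)
    have wnz: "w \<noteq> 0\<^sub>v n"
    proof
      assume "w = 0\<^sub>v n"
      hence "P *\<^sub>v w = 0\<^sub>v n" using mat_vec_zero[OF P] by simp
      thus False using Pw vnz by simp
    qed
    have Dw: "D *\<^sub>v w = \<mu> \<cdot>\<^sub>v w"
    proof -
      have "D *\<^sub>v w = (D * Q) *\<^sub>v v" unfolding w_def using D Q v by simp
      also have "\<dots> = (Q * M) *\<^sub>v v" unfolding QM ..
      also have "\<dots> = Q *\<^sub>v (M *\<^sub>v v)" using Q M v by simp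
      also have "\<dots> = \<mu> \<cdot>\<^sub>v w" unfolding Mv w_def by (rule mult_mat_vec[OF Q v])
      finally show ?thesis .
    qed
    obtain k where k: "k < n" and wk: "w $ k \<noteq> 0"
    proof (rule ccontr)
      assume "\<not> thesis"
      hence "\<forall>k<n. w $ k = 0" using that by blast
      hence "w = 0\<^sub>v n" using w by (intro eq_vecI) auto
      thus False using wnz by simp
    qed
    have "(D *\<^sub>v w) $ k = (\<Sum>j\<in>{0..<n}. D $$ (k,j) * w $ j)" using D w k by (simp add: scalar_prod_def)
    also have "\<dots> = (\<Sum>j\<in>{0..<n}. if j = k then D $$ (k,k) * w $ k else 0)"
      using dD D k unfolding diagonal_mat_def by (intro sum.cong) auto
    also have "\<dots> = d k * w $ k" using k unfolding d_def by simp
    finally have "(\<mu> \<cdot>\<^sub>v w) $ k = d k * w $ k" unfolding Dw .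
    hence "d k * w $ k = \<mu> * w $ k" using k w by (simp add: mult.commute) blast
    hence dk: "d k = \<mu>" using wk by simp
    have "k = n - 1"
    proof (rule ccontr)
      assume "k \<noteq> n - 1"
      hence "k \<le> n - 2" using k by simp
      hence "d (n - 2) \<le> d k" using sorted n2 unfolding d_def by blast
      thus False using dpen dk mneg by simp
    qed
    thus "\<mu> \<in> {d (n - 1)}" using dk by simp
  qed
  have "d (n - 1) \<in> {\<mu>. eigenvalue M \<mu> \<and> \<mu> < 0}"
  proof -
    have "eigenvector M (col P (n - 1)) (d (n - 1))"
      unfolding eigenvector_def using cc[OF n2(2)] M by simp
    thus ?thesis using dlast unfolding eigenvalue_def by blast
  qed
  hence eqset: "{\<mu>. eigenvalue M \<mu> \<and> \<mu> < 0} = {d (n - 1)}" using sub by blast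
  have inv: "invertible_mat P"
    unfolding invertible_mat_def inverts_mat_def square_mat.simps using P Q PQ QP by auto
  have MPe: "A_inv \<sigma> n * B_mat n * P = P * D" unfolding Ainv_eq B_def[symmetric] M_def[symmetric] by (rule MP)
  have "D $$ (0, 0) \<le> 1" using dbound[OF n0] unfolding d_def by simp
  moreover have "D $$ (n - 1, n - 1) \<ge> -1" using dbound[OF n2(2)] unfolding d_def by simp
  ultimately have ex: "\<exists>P D. P \<in> carrier_mat n n \<and> D \<in> carrier_mat n n \<and> invertible_mat P \<and> diagonal_mat D
           \<and> A_inv \<sigma> n * B_mat n * P = P * D
           \<and> (\<forall>i j. i \<le> j \<and> j < n \<longrightarrow> D $$ (j, j) \<le> D $$ (i, i))
           \<and> D $$ (0, 0) \<le> 1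
           \<and> D $$ (n - 2, n - 2) > 0
           \<and> D $$ (n - 1, n - 1) < 0
           \<and> D $$ (n - 1, n - 1) \<ge> -1"
    using P D inv dD MPe sorted dpen dlast unfolding d_def by blast
  have "card {\<mu>. eigenvalue (A_inv \<sigma> n * B_mat n) \<mu> \<and> \<mu> < 0} = 1"
    unfolding Ainv_eq B_def[symmetric] M_def[symmetric] eqset by simp
  with ex show ?thesis by blast
qed

end
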